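(* Let $\mathcal A$ be a unital $C^*$-algebra, $a\in\mathcal A$, and $p,q\in\mathcal A$ projections such that $a$ is invertible up to $(p,q)$, with $(p,q)$-inverse $b$. Let $r_1,r_2,s_1,s_2\in\mathcal A$ be projections with $1-p=r_1+r_2$ and $1-q=s_1+s_2$. If $a$ is invertible up to $(1-r_1,1-s_1)$ and either $\|s_2ar_1\|<\|b\|^{-1}$ or $\|s_1ar_2\|<\|b\|^{-1}$, then $a$ is invertible up to $(1-r_2,1-s_2)$.
   Context: For $a\in\mathcal A$ and projections $p,q$ in a unital $C^*$-algebra $\mathcal A$, $a$ is invertible up to $(p,q)$ if there is $b\in\mathcal A$ with $b=(1-p)b(1-q)$, $(1-q)a(1-p)b=1-q$ and $b(1-q)a(1-p)=1-p$; $b$ is called the $(p,q)$-inverse of $a$. *)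

theory Defs
  imports Complex_Main
begin

class unital_cstar_algebra = real_normed_algebra_1 + banach +
  fixes scaleC :: "complex \<Rightarrow> 'a \<Rightarrow> 'a"
    and adj :: "'a \<Rightarrow> 'a"
  assumes scaleC_add_right: "scaleC c (x + y) = scaleC c x + scaleC c y"
    and scaleC_add_left: "scaleC (c + d) x = scaleC c x + scaleC d x"
    and scaleC_scaleC: "scaleC c (scaleC d x) = scaleC (c * d) x"
    and scaleC_one: "scaleC 1 x = x"
    and scaleR_scaleC: "scaleR r x = scaleC (complex_of_real r) x"
    and norm_scaleC: "norm (scaleC c x) = cmod c * norm x"
    and mult_scaleC_left: "scaleC c x * y = scaleC c (x * y)"
    and mult_scaleC_right: "x * scaleC c y = scaleC c (x * y)"
    and adj_add: "adj (x + y) = adj x + adj y"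
    and adj_scaleC: "adj (scaleC c x) = scaleC (cnj c) (adj x)"
    and adj_mult: "adj (x * y) = adj y * adj x"
    and adj_adj: "adj (adj x) = x"
    and cstar_identity: "norm (adj x * x) = norm x * norm x"

definition is_projection :: "'a::unital_cstar_algebra \<Rightarrow> bool" where
  "is_projection p \<longleftrightarrow> p * p = p \<and> adj p = p"

definition pq_inverse :: "'a::unital_cstar_algebra \<Rightarrow> 'a \<Rightarrow> 'a \<Rightarrow> 'a \<Rightarrow> bool" where
  "pq_inverse a p q b \<longleftrightarrow>
     b = (1 - p) * b * (1 - q) \<and>
     (1 - q) * a * (1 - p) * b = 1 - q \<and>
     b * (1 - q) * a * (1 - p) = 1 - p"

definition invertible_upto :: "'a::unital_cstar_algebra \<Rightarrow> 'a \<Rightarrow> 'a \<Rightarrow> bool" where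
  "invertible_upto a p q \<longleftrightarrow> (\<exists>b. pq_inverse a p q b)"

end

theory Submission
  imports Defs
begin

lemma neumann:
  fixes x :: "'a::{real_normed_algebra_1,banach}"
  assumes "norm x < 1"
  shows "\<exists>w. (1 - x) * w = 1 \<and> w * (1 - x) = 1 \<and> x * w = w * x"
proof -
  have s: "summable (\<lambda>n. x ^ n)"
    by (rule summable_comparison_test'[OF summable_geometric[of "norm x"], of 0])
       (use assms norm_power_ineq in auto)
  define w where "w = suminf (\<lambda>n. x ^ n)"
  have h: "(\<Sum>n. x ^ Suc n) = w - 1" using suminf_split_head[OF s] by (simp add: w_def)
  have l: "x * w = w - 1"
    using suminf_mult[OF s, of x] h by (simp add: w_def)
  have r: "w * x = w - 1"
    using suminf_mult2[OF s, of x] h by (simp add: w_def power_commutes)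
  show ?thesis
    by (rule exI[of _ w]) (simp add: algebra_simps l r)
qed

lemma perturb:
  fixes a p q b E :: "'a::unital_cstar_algebra"
  assumes pp: "p * p = p" and qq: "q * q = q"
    and inv: "pq_inverse a p q b"
    and E: "(1 - q) * E * (1 - p) = E"
    and n: "norm E < inverse (norm b)"
  shows "\<exists>X. pq_inverse (a - E) p q X"
proof -
  define P where "P = 1 - p"
  define Q where "Q = 1 - q"
  have PP: "P * P = P" using pp by (simp add: P_def algebra_simps)
  have QQ: "Q * Q = Q" using qq by (simp add: Q_def algebra_simps)
  have b1: "b = P * b * Q" and b2: "Q * a * P * b = Q" and b3: "b * Q * a * P = P"
    using inv unfolding pq_inverse_def P_def Q_def by auto
  have E': "Q * E * P = E" using E by (simp add: P_def Q_def)
  have QE: "Q * E = E" by (metis E' QQ mult.assoc)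
  have EP: "E * P = E" by (metis E' PP mult.assoc)
  have nb: "norm b > 0"
  proof (rule ccontr)
    assume "\<not> norm b > 0"
    hence "norm b = 0" by (metis norm_ge_zero order_neq_le_trans)
    thus False using n by simp
  qed
  have "norm (b * E) \<le> norm b * norm E" by (rule norm_mult_ineq)
  also have "\<dots> < norm b * inverse (norm b)" using n nb by (rule mult_strict_left_mono)
  also have "\<dots> = 1" using nb by simp
  finally obtain w where w1: "(1 - b * E) * w = 1" and w2: "w * (1 - b * E) = 1"
    and wc: "b * E * w = w * (b * E)"
    using neumann[of "b * E"] by auto
  have Pb: "P * b = b" by (metis b1 PP mult.assoc)
  have bQ: "b * Q = b" by (metis b1 QQ mult.assoc)
  have w1': "w = 1 + b * E * w" using w1 by (simp add: algebra_simps)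
  have w2': "w = 1 + w * (b * E)" using w2 by (simp add: algebra_simps)
  have Pw: "P * w = P + b * E * w"
    by (subst w1') (simp add: distrib_left Pb flip: mult.assoc)
  have wP: "w * P = P + w * (b * E)"
    by (subst w2') (simp add: distrib_right EP mult.assoc)
  have PwwP: "P * w = w * P" using Pw wP wc by simp
  have L1: "(1 - b * E) * P = P - b * E" by (simp add: algebra_simps EP mult.assoc)
  have L2: "P * (1 - b * E) = P - b * E" by (simp add: algebra_simps Pb flip: mult.assoc)
  have K: "Q * (a - E) * P = Q * a * P * (P - b * E)"
    by (simp add: algebra_simps mult.assoc PP) (metis E' QE b2 mult.assoc)
  define X where "X = P * w * b"
  have c1: "X = P * X * Q"
  proof -
    have "P * X * Q = (P * P) * w * (b * Q)" by (simp add: X_def mult.assoc)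
    then show ?thesis by (simp add: PP bQ X_def)
  qed
  have PPx: "\<And>x. P * (P * x) = P * x" by (metis PP mult.assoc)
  have wPx: "\<And>x. w * (P * x) = P * (w * x)" by (metis PwwP mult.assoc)
  have w1x: "\<And>x. (1 - b * E) * (w * x) = x" by (metis w1 mult.assoc mult_1_left)
  have w2x: "\<And>x. w * ((1 - b * E) * x) = x" by (metis w2 mult.assoc mult_1_left)
  have b2x: "\<And>x. Q * (a * (P * (b * x))) = Q * x" by (metis b2 mult.assoc)
  have b3x: "\<And>x. b * (Q * (a * (P * x))) = P * x" by (metis b3 mult.assoc)
  have L1x: "\<And>x. (P - b * E) * x = (1 - b * E) * (P * x)" by (metis L1 mult.assoc)
  have L2x: "\<And>x. (P - b * E) = P * (1 - b * E)" using L2 by simp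
  have "Q * (a - E) * P * X = Q * (a * (P * ((P - b * E) * (P * (w * b)))))"
    unfolding K X_def by (simp add: mult.assoc)
  also have "\<dots> = Q * (a * (P * (P * b)))"
    by (simp only: L1x PPx flip: wPx) (simp only: w1x PPx)
  also have "\<dots> = Q" using b2x[of 1] by (simp add: PPx)
  finally have c2: "Q * (a - E) * P * X = Q" .
  have "X * (Q * (a - E) * P) = P * (w * (b * (Q * (a * (P * (P - b * E))))))"
    unfolding K X_def by (simp add: mult.assoc)
  also have "\<dots> = P * (w * (P * (P * (1 - b * E))))"
    by (simp only: b3x L2x)
  also have "\<dots> = P * (P * (w * ((1 - b * E) * 1)))"
    by (simp only: PPx wPx mult_1_right)
  also have "\<dots> = P" by (simp only: w2x PPx) simp
  finally have c3: "X * (Q * (a - E) * P) = P" .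
  show ?thesis unfolding pq_inverse_def
    using c1 c2 c3 by (auto simp: P_def Q_def mult.assoc)
qed

lemma block1:
  fixes a r1 r2 s1 s2 X c :: "'a::ring_1"
  assumes i: "r1*r1 = r1" "r2*r2=r2" "s1*s1=s1" "s2*s2=s2"
    and o: "r1*r2 = 0" "r2*r1=0" "s1*s2=0" "s2*s1=0"
    and X1: "X = (r1+r2)*X*(s1+s2)" and X2: "(s1+s2)*a*(r1+r2)*X = s1+s2"
    and X3: "X*(s1+s2)*a*(r1+r2) = r1+r2"
    and z: "s2*a*r1 = 0" and c: "s1*a*r1*c = s1"
  shows "r2*X*s2 = r2*(r2*X*s2)*s2 \<and> s2*a*r2*(r2*X*s2) = s2 \<and> (r2*X*s2)*s2*a*r2 = r2"
proof -
  have ox: "\<And>x. r1*(r2*x) = 0" "\<And>x. r2*(r1*x) = 0" "\<And>x. s1*(s2*x) = 0" "\<And>x. s2*(s1*x) = 0"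
    using o by (metis mult.assoc mult_zero_left)+
  have ix: "\<And>x. r1*(r1*x) = r1*x" "\<And>x. r2*(r2*x) = r2*x" "\<And>x. s1*(s1*x) = s1*x" "\<And>x. s2*(s2*x) = s2*x"
    using i by (metis mult.assoc)+
  have zx: "\<And>x. s2*(a*(r1*x)) = 0" using z by (metis mult.assoc mult_zero_left)
  have "r2*(X*(s1+s2)*a*(r1+r2))*r1 = 0" using X3 o by (simp add: algebra_simps)
  hence h0: "r2*(X*(s1*(a*r1))) = 0" using z o i by (simp add: algebra_simps ox ix zx)
  have h1: "r2*(X*s1) = 0"
  proof -
    have "r2*(X*s1) = r2*(X*(s1*a*r1*c))" using c by simp
    also have "\<dots> = r2*(X*(s1*(a*r1)))*c" by (simp add: mult.assoc)
    finally show ?thesis using h0 by simp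
  qed
  have h1x: "\<And>x. r2*(X*(s1*x)) = 0" using h1 by (metis mult.assoc mult_zero_left)
  have "s2*((s1+s2)*a*(r1+r2)*X)*s2 = s2" using X2 o i by (simp add: algebra_simps)
  hence g1: "s2*(a*(r2*(X*s2))) = s2" using o i by (simp add: algebra_simps ox ix zx)
  have "r2*(X*(s1+s2)*a*(r1+r2))*r2 = r2" using X3 o i by (simp add: algebra_simps)
  hence g2: "r2*(X*(s2*(a*r2))) = r2" using o i by (simp add: algebra_simps ox ix zx h1x)
  show ?thesis using g1 g2 by (simp add: mult.assoc ix i)
qed
lemma block2:
  fixes a r1 r2 s1 s2 X c :: "'a::ring_1"
  assumes i: "r1*r1 = r1" "r2*r2=r2" "s1*s1=s1" "s2*s2=s2"
    and o: "r1*r2 = 0" "r2*r1=0" "s1*s2=0" "s2*s1=0"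
    and X1: "X = (r1+r2)*X*(s1+s2)" and X2: "(s1+s2)*a*(r1+r2)*X = s1+s2"
    and X3: "X*(s1+s2)*a*(r1+r2) = r1+r2"
    and z: "s1*a*r2 = 0" and c: "c*s1*a*r1 = r1"
  shows "r2*X*s2 = r2*(r2*X*s2)*s2 \<and> s2*a*r2*(r2*X*s2) = s2 \<and> (r2*X*s2)*s2*a*r2 = r2"
proof -
  have ox: "\<And>x. r1*(r2*x) = 0" "\<And>x. r2*(r1*x) = 0" "\<And>x. s1*(s2*x) = 0" "\<And>x. s2*(s1*x) = 0"
    using o by (metis mult.assoc mult_zero_left)+
  have ix: "\<And>x. r1*(r1*x) = r1*x" "\<And>x. r2*(r2*x) = r2*x" "\<And>x. s1*(s1*x) = s1*x" "\<And>x. s2*(s2*x) = s2*x"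
    using i by (metis mult.assoc)+
  have zx: "\<And>x. s1*(a*(r2*x)) = 0" using z by (metis mult.assoc mult_zero_left)
  have "s1*((s1+s2)*a*(r1+r2)*X)*s2 = 0" using X2 o i by (simp add: algebra_simps)
  hence h0: "s1*(a*(r1*(X*s2))) = 0" using z o i by (simp add: algebra_simps ox ix zx)
  have h1: "r1*(X*s2) = 0"
  proof -
    have "r1*(X*s2) = (c*s1*a*r1)*(X*s2)" using c by simp
    also have "\<dots> = c*(s1*(a*(r1*(X*s2))))" by (simp add: mult.assoc)
    finally show ?thesis using h0 by simp
  qed
  have h1x: "\<And>x. r1*(X*(s2*x)) = 0" using h1 by (metis mult.assoc mult_zero_left)
  have "s2*((s1+s2)*a*(r1+r2)*X)*s2 = s2" using X2 o i by (simp add: algebra_simps)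
  hence g1: "s2*(a*(r2*(X*s2))) = s2" using o i by (simp add: algebra_simps ox ix zx h1 h1x)
  have "r2*(X*(s1+s2)*a*(r1+r2))*r2 = r2" using X3 o i by (simp add: algebra_simps)
  hence g2: "r2*(X*(s2*(a*r2))) = r2" using o i z by (simp add: algebra_simps ox ix zx h1x)
  show ?thesis using g1 g2 by (simp add: mult.assoc ix i)
qed

lemma orth:
  fixes r1 r2 :: "'a::unital_cstar_algebra"
  assumes "is_projection r1" "is_projection r2" "(r1+r2)*(r1+r2) = r1+r2"
  shows "r1*r2 = 0 \<and> r2*r1 = 0"
proof -
  have i: "r1*r1 = r1" "r2*r2 = r2" "adj r1 = r1" "adj r2 = r2"
    using assms(1,2) unfolding is_projection_def by auto
  have h: "r1*r2 + r2*r1 = 0" using assms(3) i by (simp add: algebra_simps)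
  have "r1*(r1*r2 + r2*r1)*r1 = 0" using h by simp
  hence "r1*r2*r1 + r1*r2*r1 = 0" using i by (simp add: algebra_simps) (metis mult.assoc)
  hence "scaleR 2 (r1*r2*r1) = 0" by (simp add: scaleR_2)
  hence y: "r1*r2*r1 = 0" by simp
  have "norm (r2*r1) * norm (r2*r1) = norm (adj (r2*r1) * (r2*r1))" by (simp only: cstar_identity)
  also have "adj (r2*r1) * (r2*r1) = r1*r2*r1" using i by (simp add: adj_mult mult.assoc) (metis i(2) mult.assoc)
  finally have "norm (r2*r1) * norm (r2*r1) = 0" using y by simp
  hence z: "r2*r1 = 0" by simp
  thus ?thesis using h by simp
qed

theorem mainTheorem10:
  fixes a p q b r1 r2 s1 s2 :: "'a::unital_cstar_algebra"
  assumes "is_projection p" and "is_projection q"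
    and "pq_inverse a p q b"
    and "is_projection r1" and "is_projection r2"
    and "is_projection s1" and "is_projection s2"
    and "1 - p = r1 + r2" and "1 - q = s1 + s2"
    and "invertible_upto a (1 - r1) (1 - s1)"
    and "norm (s2 * a * r1) < inverse (norm b) \<or> norm (s1 * a * r2) < inverse (norm b)"
  shows "invertible_upto a (1 - r2) (1 - s2)"
proof -
  have pp: "p*p = p" and qq: "q*q = q" using assms(1,2) unfolding is_projection_def by auto
  have "(1-p)*(1-p) = 1-p" using pp by (simp add: algebra_simps)
  hence "(r1+r2)*(r1+r2) = r1+r2" using assms(8) by simp
  hence or: "r1*r2 = 0" "r2*r1 = 0" using orth assms(4,5) by blast+
  have "(1-q)*(1-q) = 1-q" using qq by (simp add: algebra_simps)
  hence "(s1+s2)*(s1+s2) = s1+s2" using assms(9) by simp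
  hence os: "s1*s2 = 0" "s2*s1 = 0" using orth assms(6,7) by blast+
  have i: "r1*r1 = r1" "r2*r2=r2" "s1*s1=s1" "s2*s2=s2"
    using assms(4-7) unfolding is_projection_def by auto
  have ox: "\<And>x. r1*(r2*x) = 0" "\<And>x. r2*(r1*x) = 0" "\<And>x. s1*(s2*x) = 0" "\<And>x. s2*(s1*x) = 0"
    using or os by (metis mult.assoc mult_zero_left)+
  have ix: "\<And>x. r1*(r1*x) = r1*x" "\<And>x. r2*(r2*x) = r2*x" "\<And>x. s1*(s1*x) = s1*x" "\<And>x. s2*(s2*x) = s2*x"
    using i by (metis mult.assoc)+
  obtain c where c: "pq_inverse a (1 - r1) (1 - s1) c" using assms(10) unfolding invertible_upto_def by blast
  hence c1: "s1*a*r1*c = s1" and c2: "c*s1*a*r1 = r1" unfolding pq_inverse_def by auto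
  show ?thesis
  proof (cases "norm (s2 * a * r1) < inverse (norm b)")
    case True
    define E where "E = s2*a*r1"
    have "(1-q)*E*(1-p) = E" unfolding E_def assms(8,9) using i or os
      by (simp add: algebra_simps ox ix)
    then obtain X where X: "pq_inverse (a - E) p q X" using perturb[OF pp qq assms(3)] True E_def by blast
    hence X1: "X = (r1+r2)*X*(s1+s2)" and X2: "(s1+s2)*(a-E)*(r1+r2)*X = s1+s2"
      and X3: "X*(s1+s2)*(a-E)*(r1+r2) = r1+r2" unfolding pq_inverse_def assms(8,9) by auto
    have z: "s2*(a-E)*r1 = 0" unfolding E_def using i by (simp add: algebra_simps ix)
    have e1: "s1*(a-E)*r1 = s1*a*r1" unfolding E_def using i by (simp add: algebra_simps ox)
    have e2: "s2*(a-E)*r2 = s2*a*r2" unfolding E_def using i or by (simp add: algebra_simps ox)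
    have "s1*(a-E)*r1*c = s1" using e1 c1 by simp
    note B = block1[OF i or os X1 X2 X3 z this]
    have e2': "\<And>x. x*s2*(a-E)*r2 = x*s2*a*r2" using e2 by (metis mult.assoc)
    show ?thesis unfolding invertible_upto_def pq_inverse_def
      apply (rule exI[of _ "r2*X*s2"]) using B e2'[of "r2*X*s2"] e2 by simp
  next
    case False
    hence F: "norm (s1 * a * r2) < inverse (norm b)" using assms(11) by blast
    define E where "E = s1*a*r2"
    have "(1-q)*E*(1-p) = E" unfolding E_def assms(8,9) using i or os
      by (simp add: algebra_simps ox ix)
    then obtain X where X: "pq_inverse (a - E) p q X" using perturb[OF pp qq assms(3)] F E_def by blast
    hence X1: "X = (r1+r2)*X*(s1+s2)" and X2: "(s1+s2)*(a-E)*(r1+r2)*X = s1+s2"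
      and X3: "X*(s1+s2)*(a-E)*(r1+r2) = r1+r2" unfolding pq_inverse_def assms(8,9) by auto
    have z: "s1*(a-E)*r2 = 0" unfolding E_def using i by (simp add: algebra_simps ix)
    have e1: "s1*(a-E)*r1 = s1*a*r1" unfolding E_def using i or by (simp add: algebra_simps ox)
    have e2: "s2*(a-E)*r2 = s2*a*r2" unfolding E_def using i os by (simp add: algebra_simps ox)
    have "c*s1*(a-E)*r1 = r1" using e1 c2 by (simp add: mult.assoc)
    note B = block2[OF i or os X1 X2 X3 z this]
    have e2': "\<And>x. x*s2*(a-E)*r2 = x*s2*a*r2" using e2 by (metis mult.assoc)
    show ?thesis unfolding invertible_upto_def pq_inverse_def
      apply (rule exI[of _ "r2*X*s2"]) using B e2'[of "r2*X*s2"] e2 by simp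
  qed
qed

end
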